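(* Let $w$ be a good word with word polynomial $p_w$ and let $z\in\mathbb{C}\setminus\{0\}$ be such that $\Gamma_z$ is discrete. Then $\Gamma_{p_w(z)}$ is also discrete.
   Context: $\Gamma_z=\langle \pm\begin{pmatrix}1&1\\0&1\end{pmatrix},\pm\begin{pmatrix}1&0\\ z&1\end{pmatrix}\rangle\subset PSL(2,\mathbb{C})$. For $x,y\in PSL(2,\mathbb{C})$, $\gamma(x,y)=\operatorname{tr}[x,y]-2$. A good word is a reduced word $w=a^{m_1}ba^{m_2}b\cdots ba^{m_n}$ in $\langle a,b\mid b^2=1\rangle$ with $n\ge3$ and $m_i\ne0$ for $2\le i\le n-1$; its word polynomial $p_w\in\mathbb{Z}[z]$ is the unique polynomial such that for every parabolic $f$ and every order-two elliptic $\phi$ in $PSL(2,\mathbb{C})$, $\gamma(f,w(f,\phi))=p_w(\gamma(f,\phi))$, where $w(f,\phi)$ substitutes $a=f$, $b=\phi$. *)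

theory Defs
  imports "HOL-Analysis.Analysis" "HOL-Computational_Algebra.Polynomial"
begin

text \<open>Elements of PSL(2,C) are represented by matrices in SL(2,C) (type complex^2^2
  with determinant 1); every notion below is invariant under A \<mapsto> -A.\<close>

type_synonym cmat = "complex^2^2"

definition mat2 :: "complex \<Rightarrow> complex \<Rightarrow> complex \<Rightarrow> complex \<Rightarrow> cmat" where
  "mat2 a b c d = vector [vector [a, b], vector [c, d]]"

definition in_SL2 :: "cmat \<Rightarrow> bool" where
  "in_SL2 A \<longleftrightarrow> det A = 1"

definition zpow :: "cmat \<Rightarrow> int \<Rightarrow> cmat" where
  "zpow A m = (if 0 \<le> m then ((\<lambda>X. X ** A) ^^ nat m) (mat 1)
               else ((\<lambda>X. X ** matrix_inv A) ^^ nat (- m)) (mat 1))"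

definition gam :: "cmat \<Rightarrow> cmat \<Rightarrow> complex" where
  "gam x y = trace (x ** y ** matrix_inv x ** matrix_inv y) - 2"

definition parabolic :: "cmat \<Rightarrow> bool" where
  "parabolic A \<longleftrightarrow> in_SL2 A \<and> A \<noteq> mat 1 \<and> A \<noteq> - mat 1 \<and> (trace A)\<^sup>2 = 4"

text \<open>Elliptic element of order two in PSL(2,C): trace 0 (equivalently A^2 = -I in SL(2,C)).\<close>
definition elliptic_order_two :: "cmat \<Rightarrow> bool" where
  "elliptic_order_two A \<longleftrightarrow> in_SL2 A \<and> trace A = 0"

text \<open>A word a^{m_1} b a^{m_2} b \<dots> b a^{m_n} is encoded by the list [m_1,\<dots>,m_n].\<close>
definition good_word :: "int list \<Rightarrow> bool" where
  "good_word ms \<longleftrightarrow> length ms \<ge> 3 \<and> (\<forall>i. 1 \<le> i \<and> i < length ms - 1 \<longrightarrow> ms ! i \<noteq> 0)"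

fun word_eval :: "int list \<Rightarrow> cmat \<Rightarrow> cmat \<Rightarrow> cmat" where
  "word_eval [] f \<phi> = mat 1"
| "word_eval [m] f \<phi> = zpow f m"
| "word_eval (m # m' # ms) f \<phi> = zpow f m ** \<phi> ** word_eval (m' # ms) f \<phi>"

definition is_word_poly :: "int list \<Rightarrow> int poly \<Rightarrow> bool" where
  "is_word_poly w p \<longleftrightarrow>
     (\<forall>f \<phi>. parabolic f \<and> elliptic_order_two \<phi> \<longrightarrow>
        gam f (word_eval w f \<phi>) = poly (map_poly of_int p) (gam f \<phi>))"

inductive_set gen_group :: "cmat set \<Rightarrow> cmat set" for S where
  one: "mat 1 \<in> gen_group S"
| mul: "g \<in> gen_group S \<Longrightarrow> s \<in> S \<Longrightarrow> g ** s \<in> gen_group S"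
| mul_inv: "g \<in> gen_group S \<Longrightarrow> s \<in> S \<Longrightarrow> g ** matrix_inv s \<in> gen_group S"

text \<open>Preimage in SL(2,C) of Gamma_z = < \<pm>[1 1;0 1], \<pm>[1 0; z 1] > \<subseteq> PSL(2,C).\<close>
definition Gamma_grp :: "complex \<Rightarrow> cmat set" where
  "Gamma_grp z = gen_group {mat2 1 1 0 1, mat2 1 0 z 1, - mat 1}"

text \<open>Discrete subset (every point isolated).  The preimage in SL(2,C) of a subgroup of
  PSL(2,C) is discrete iff the subgroup is discrete in PSL(2,C) (2-fold covering).\<close>
definition discrete_set :: "cmat set \<Rightarrow> bool" where
  "discrete_set G \<longleftrightarrow> (\<forall>g\<in>G. \<exists>e>0. \<forall>h\<in>G. h \<noteq> g \<longrightarrow> e \<le> dist h g)"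

end

theory Submission
  imports Defs
begin

lemma mat2_nth [simp]:
  "mat2 a b c d $ 1 $ 1 = a" "mat2 a b c d $ 1 $ 2 = b"
  "mat2 a b c d $ 2 $ 1 = c" "mat2 a b c d $ 2 $ 2 = d"
  by (simp_all add: mat2_def)

lemma cmat_eq_iff: "(A::cmat) = B \<longleftrightarrow> A$1$1 = B$1$1 \<and> A$1$2 = B$1$2 \<and> A$2$1 = B$2$1 \<and> A$2$2 = B$2$2"
  by (auto simp: vec_eq_iff forall_2)

lemma cmat_expand: "(A::cmat) = mat2 (A$1$1) (A$1$2) (A$2$1) (A$2$2)"
  by (simp add: cmat_eq_iff)

lemma mat2_eq_iff: "mat2 a b c d = mat2 a' b' c' d' \<longleftrightarrow> a = a' \<and> b = b' \<and> c = c' \<and> d = d'"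
  by (simp add: cmat_eq_iff)

lemma mat2_mult [simp]: "mat2 a b c d ** mat2 e f g h = mat2 (a*e+b*g) (a*f+b*h) (c*e+d*g) (c*f+d*h)"
  by (simp add: cmat_eq_iff matrix_matrix_mult_def sum_2)

lemma mat1_mat2: "(mat 1 :: cmat) = mat2 1 0 0 1"
  by (simp add: cmat_eq_iff mat_def)

lemma neg_mat1_mat2: "(- mat 1 :: cmat) = mat2 (-1) 0 0 (-1)"
  by (simp add: cmat_eq_iff mat_def)

lemma det_mat2 [simp]: "det (mat2 a b c d) = a*d - b*c"
  by (simp add: det_2)

lemma trace_mat2 [simp]: "trace (mat2 a b c d) = a + d"
  by (simp add: trace_def sum_2)

lemma matrix_inv_mat2:
  assumes "a*d - b*c = 1"
  shows "matrix_inv (mat2 a b c d) = mat2 d (-b) (-c) a"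
proof -
  let ?A = "mat2 a b c d" and ?B = "mat2 d (-b) (-c) a"
  have AB: "?A ** ?B = mat 1" "?B ** ?A = mat 1"
    using assms by (auto simp: mat1_mat2 mat2_eq_iff algebra_simps)
  have ex: "\<exists>A'. ?A ** A' = mat 1 \<and> A' ** ?A = mat 1" using AB by blast
  have "?A ** matrix_inv ?A = mat 1 \<and> matrix_inv ?A ** ?A = mat 1"
    unfolding matrix_inv_def by (rule someI_ex[OF ex])
  then have "matrix_inv ?A = matrix_inv ?A ** (?A ** ?B)" using AB by simp
  also have "\<dots> = (matrix_inv ?A ** ?A) ** ?B" by (rule matrix_mul_assoc)
  also have "\<dots> = ?B" using \<open>?A ** matrix_inv ?A = mat 1 \<and> matrix_inv ?A ** ?A = mat 1\<close>
    by (simp del: mat2_mult)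
  finally show ?thesis .
qed

lemma matrix_inv_det1:
  assumes "det (A::cmat) = 1"
  shows "matrix_inv A = mat2 (A$2$2) (-A$1$2) (-A$2$1) (A$1$1)"
proof -
  have "A = mat2 (A$1$1) (A$1$2) (A$2$1) (A$2$2)" by (rule cmat_expand)
  then show ?thesis using assms matrix_inv_mat2 by (metis det_mat2)
qed

lemma gen_group_mult:
  assumes "y \<in> gen_group S" "x \<in> gen_group S"
  shows "x ** y \<in> gen_group S"
  using assms(1)
proof induction
  case one then show ?case using assms(2) by simp
next
  case (mul g s) then show ?case by (metis gen_group.mul matrix_mul_assoc)
next
  case (mul_inv g s) then show ?case by (metis gen_group.mul_inv matrix_mul_assoc)
qed

lemma gen_group_gen: "s \<in> S \<Longrightarrow> s \<in> gen_group S" "s \<in> S \<Longrightarrow> matrix_inv s \<in> gen_group S"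
  using gen_group.mul[OF gen_group.one] gen_group.mul_inv[OF gen_group.one] by (metis matrix_mul_lid)+

lemma conj_gen:
  assumes "x \<in> gen_group S"
    and "Minv ** M = mat 1" "M ** Minv = mat 1"
    and "\<forall>s\<in>S. M ** s ** Minv \<in> G \<and> M ** matrix_inv s ** Minv \<in> G"
    and "mat 1 \<in> G" and "\<forall>x\<in>G. \<forall>y\<in>G. x ** y \<in> G"
  shows "M ** x ** Minv \<in> G"
  using assms(1)
proof induction
  case one then show ?case using assms by simp
next
  case (mul g s)
  have "M ** (g ** s) ** Minv = (M ** g ** Minv) ** (M ** s ** Minv)"
    by (metis assms(2) matrix_mul_assoc matrix_mul_lid)
  then show ?case using mul assms by simp
next
  case (mul_inv g s)
  have "M ** (g ** matrix_inv s) ** Minv = (M ** g ** Minv) ** (M ** matrix_inv s ** Minv)"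
    by (metis assms(2) matrix_mul_assoc matrix_mul_lid)
  then show ?case using mul_inv assms by simp
qed

lemma Gamma_mems:
  "mat2 1 1 0 1 \<in> Gamma_grp z" "mat2 1 (-1) 0 1 \<in> Gamma_grp z"
  "mat2 1 0 z 1 \<in> Gamma_grp z" "mat2 1 0 (-z) 1 \<in> Gamma_grp z"
  "mat2 (-1) 0 0 (-1) \<in> Gamma_grp z" "mat 1 \<in> Gamma_grp z"
proof -
  have i1: "matrix_inv (mat2 1 1 0 1) = mat2 1 (-1) 0 1" by (simp add: matrix_inv_mat2)
  have i2: "matrix_inv (mat2 1 0 z 1) = mat2 1 0 (-z) 1" by (simp add: matrix_inv_mat2)
  let ?S = "{mat2 1 1 0 1, mat2 1 0 z 1, - mat 1}"
  have m: "mat2 1 1 0 1 \<in> ?S" "mat2 1 0 z 1 \<in> ?S" "- mat 1 \<in> ?S" by auto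
  show "mat2 1 1 0 1 \<in> Gamma_grp z" "mat2 1 0 z 1 \<in> Gamma_grp z"
    unfolding Gamma_grp_def using gen_group_gen(1)[OF m(1)] gen_group_gen(1)[OF m(2)] by auto
  show "mat2 (-1) 0 0 (-1) \<in> Gamma_grp z"
    unfolding Gamma_grp_def using gen_group_gen(1)[OF m(3)] by (simp add: neg_mat1_mat2)
  show "mat2 1 (-1) 0 1 \<in> Gamma_grp z" "mat2 1 0 (-z) 1 \<in> Gamma_grp z"
    unfolding Gamma_grp_def using gen_group_gen(2)[OF m(1)] gen_group_gen(2)[OF m(2)] i1 i2 by auto
  show "mat 1 \<in> Gamma_grp z" unfolding Gamma_grp_def by (rule gen_group.one)
qed

lemma Gamma_mult: "x \<in> Gamma_grp z \<Longrightarrow> y \<in> Gamma_grp z \<Longrightarrow> x ** y \<in> Gamma_grp z"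
  unfolding Gamma_grp_def by (rule gen_group_mult)

lemma Gamma_gens_inv:
  "\<forall>s\<in>{mat2 1 1 0 1, mat2 1 0 z 1, - mat 1}. s \<in> Gamma_grp z \<and> matrix_inv s \<in> Gamma_grp z"
  using Gamma_mems[of z] by (auto simp: matrix_inv_mat2 neg_mat1_mat2)

lemma det_mult1: "det (X::cmat) = 1 \<Longrightarrow> det Y = 1 \<Longrightarrow> det (X ** Y) = 1"
  by (simp add: det_mul)

lemma inv_mult:
  assumes "det (X::cmat) = 1" "det Y = 1"
  shows "matrix_inv (X ** Y) = matrix_inv Y ** matrix_inv X"
proof -
  obtain a b c d where X: "X = mat2 a b c d" by (metis cmat_expand)
  obtain e f g h where Y: "Y = mat2 e f g h" by (metis cmat_expand)
  have d1: "a*d - b*c = 1" "e*h - f*g = 1" using assms X Y by auto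
  have "det (X ** Y) = 1" using assms by (simp add: det_mul)
  then have d3: "(a*e+b*g)*(c*f+d*h) - (a*f+b*h)*(c*e+d*g) = 1" using X Y by simp
  show ?thesis using d1 d3 X Y by (simp add: matrix_inv_mat2 mat2_eq_iff algebra_simps)
qed

definition Nset :: "complex \<Rightarrow> cmat set" where
  "Nset z = {X. det X = 1 \<and> (\<forall>u\<in>Gamma_grp z. X ** u ** matrix_inv X \<in> Gamma_grp z)}"

lemma Nset_mult:
  assumes "X \<in> Nset z" "Y \<in> Nset z"
  shows "X ** Y \<in> Nset z"
proof -
  have d: "det X = 1" "det Y = 1" using assms by (auto simp: Nset_def)
  have "(X ** Y) ** u ** matrix_inv (X ** Y) \<in> Gamma_grp z" if "u \<in> Gamma_grp z" for u
  proof -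
    have "(X ** Y) ** u ** matrix_inv (X ** Y) = X ** (Y ** u ** matrix_inv Y) ** matrix_inv X"
      using d by (simp add: inv_mult matrix_mul_assoc)
    then show ?thesis using assms that by (simp add: Nset_def)
  qed
  then show ?thesis using d by (simp add: Nset_def det_mul)
qed

lemma inv_mat1: "matrix_inv (mat 1 :: cmat) = mat 1"
  by (simp add: mat1_mat2 matrix_inv_mat2 del: mat2_mult)

lemma Nset_one: "mat 1 \<in> Nset z"
  by (simp add: Nset_def inv_mat1 det_I)

lemma Nset_f: "mat2 1 1 0 1 \<in> Nset z" "mat2 1 (-1) 0 1 \<in> Nset z"
proof -
  have "mat2 1 1 0 1 ** u ** mat2 1 (-1) 0 1 \<in> Gamma_grp z" if "u \<in> Gamma_grp z" for u
    using that unfolding Gamma_grp_def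
  proof (rule conj_gen)
    show "\<forall>s\<in>{mat2 1 1 0 1, mat2 1 0 z 1, - mat 1}.
       mat2 1 1 0 1 ** s ** mat2 1 (- 1) 0 1 \<in> gen_group {mat2 1 1 0 1, mat2 1 0 z 1, - mat 1} \<and>
       mat2 1 1 0 1 ** matrix_inv s ** mat2 1 (- 1) 0 1 \<in> gen_group {mat2 1 1 0 1, mat2 1 0 z 1, - mat 1}"
      using Gamma_gens_inv[of z] Gamma_mems[of z] Gamma_mult[of _ z] unfolding Gamma_grp_def
      by (meson gen_group_mult)
  qed (simp add: mat1_mat2, simp add: mat1_mat2, rule gen_group.one, blast intro: gen_group_mult)
  then show "mat2 1 1 0 1 \<in> Nset z" by (simp add: Nset_def matrix_inv_mat2 del: mat2_mult)
  have "mat2 1 (-1) 0 1 ** u ** mat2 1 1 0 1 \<in> Gamma_grp z" if "u \<in> Gamma_grp z" for u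
    using that unfolding Gamma_grp_def
  proof (rule conj_gen)
    show "\<forall>s\<in>{mat2 1 1 0 1, mat2 1 0 z 1, - mat 1}.
       mat2 1 (-1) 0 1 ** s ** mat2 1 1 0 1 \<in> gen_group {mat2 1 1 0 1, mat2 1 0 z 1, - mat 1} \<and>
       mat2 1 (-1) 0 1 ** matrix_inv s ** mat2 1 1 0 1 \<in> gen_group {mat2 1 1 0 1, mat2 1 0 z 1, - mat 1}"
      using Gamma_gens_inv[of z] Gamma_mems[of z] Gamma_mult[of _ z] unfolding Gamma_grp_def
      by (meson gen_group_mult)
  qed (simp add: mat1_mat2, simp add: mat1_mat2, rule gen_group.one, blast intro: gen_group_mult)
  then show "mat2 1 (-1) 0 1 \<in> Nset z" by (simp add: Nset_def matrix_inv_mat2 del: mat2_mult)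
qed

lemma Nset_phi:
  assumes c: "c\<^sup>2 = z" "c \<noteq> 0"
  shows "mat2 0 (-1/c) c 0 \<in> Nset z"
proof -
  let ?p = "mat2 0 (-1/c) c 0" and ?q = "mat2 0 (1/c) (-c) 0"
  have z0: "z \<noteq> 0" using c by auto
  have ip: "matrix_inv ?p = ?q" using c by (simp add: matrix_inv_mat2)
  have e1: "?p ** mat2 1 1 0 1 ** ?q = mat2 1 0 (-z) 1"
    using c z0 by (simp add: mat2_eq_iff field_simps power2_eq_square)
  have e2: "?p ** mat2 1 (-1) 0 1 ** ?q = mat2 1 0 z 1"
    using c z0 by (simp add: mat2_eq_iff field_simps power2_eq_square)
  have e3: "?p ** mat2 1 0 z 1 ** ?q = mat2 1 (-1) 0 1"
    using c z0 by (simp add: mat2_eq_iff field_simps power2_eq_square)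
  have e4: "?p ** mat2 1 0 (-z) 1 ** ?q = mat2 1 1 0 1"
    using c z0 by (simp add: mat2_eq_iff field_simps power2_eq_square)
  have e5: "?p ** mat2 (-1) 0 0 (-1) ** ?q = mat2 (-1) 0 0 (-1)"
    using c z0 by (simp add: mat2_eq_iff field_simps power2_eq_square)
  have invs: "matrix_inv (mat2 1 1 0 1) = mat2 1 (-1) 0 1" "matrix_inv (mat2 1 0 z 1) = mat2 1 0 (-z) 1"
    "matrix_inv (mat2 (-1) 0 0 (-1)) = mat2 (-1) 0 0 (-1)"
    by (simp_all add: matrix_inv_mat2 neg_mat1_mat2)
  have "?p ** u ** ?q \<in> Gamma_grp z" if "u \<in> Gamma_grp z" for u
    using that unfolding Gamma_grp_def
  proof (rule conj_gen)
    show "\<forall>s\<in>{mat2 1 1 0 1, mat2 1 0 z 1, - mat 1}.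
       ?p ** s ** ?q \<in> gen_group {mat2 1 1 0 1, mat2 1 0 z 1, - mat 1} \<and>
       ?p ** matrix_inv s ** ?q \<in> gen_group {mat2 1 1 0 1, mat2 1 0 z 1, - mat 1}"
      using Gamma_mems[of z] unfolding Gamma_grp_def
      by (simp only: invs e1 e2 e3 e4 e5 neg_mat1_mat2 ball_simps insert_iff empty_iff)
  qed (use c in \<open>simp add: mat1_mat2\<close>, use c in \<open>simp add: mat1_mat2\<close>, rule gen_group.one, blast intro: gen_group_mult)
  then show ?thesis using c ip by (simp add: Nset_def del: mat2_mult)
qed

lemma iter_N: "X \<in> Nset z \<Longrightarrow> ((\<lambda>Y. Y ** X) ^^ n) (mat 1) \<in> Nset z"
  by (induction n) (auto simp: Nset_one Nset_mult)

lemma zpow_N: "X \<in> Nset z \<Longrightarrow> matrix_inv X \<in> Nset z \<Longrightarrow> zpow X m \<in> Nset z"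
  by (simp add: zpow_def iter_N)

lemma word_N:
  assumes "f \<in> Nset z" "matrix_inv f \<in> Nset z" "p \<in> Nset z"
  shows "word_eval w f p \<in> Nset z"
  by (induction w rule: induct_list012) (auto simp: assms Nset_one zpow_N Nset_mult)

lemma gam_f:
  assumes "a*d - b*c = 1"
  shows "gam (mat2 1 1 0 1) (mat2 a b c d) = c\<^sup>2"
  using assms by (simp add: gam_def matrix_inv_mat2 power2_eq_square algebra_simps)

lemma matrix_add_rdistrib': "((A::cmat) + B) ** C = A ** C + B ** C"
  by (vector matrix_matrix_mult_def sum.distrib[symmetric] field_simps)

lemma conj_bounded_linear: "bounded_linear (\<lambda>X::cmat. (T::cmat) ** X ** (Ti::cmat))"
proof -
  have "linear (\<lambda>X::cmat. (T::cmat) ** X ** (Ti::cmat))"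
    by (rule linearI) (simp_all add: matrix_add_ldistrib matrix_add_rdistrib' matrix_scalar_ac scalar_matrix_assoc)
  then show ?thesis by (simp add: linear_conv_bounded_linear)
qed

lemma discrete_subset: "discrete_set G \<Longrightarrow> H \<subseteq> G \<Longrightarrow> discrete_set H"
  unfolding discrete_set_def by blast

lemma discrete_linear:
  assumes "discrete_set G" "bounded_linear L" "\<forall>h\<in>H. L h \<in> G" "\<And>x y. L x = L y \<Longrightarrow> x = y"
  shows "discrete_set H"
  unfolding discrete_set_def
proof
  fix g assume g: "g \<in> H"
  obtain K where K: "K > 0" "\<And>x. norm (L x) \<le> norm x * K"
    using bounded_linear.pos_bounded[OF assms(2)] by blast
  obtain e where e: "e > 0" "\<forall>h\<in>G. h \<noteq> L g \<longrightarrow> e \<le> dist h (L g)"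
    using assms(1) g assms(3) unfolding discrete_set_def by blast
  have "e / K \<le> dist h g" if "h \<in> H" "h \<noteq> g" for h
  proof -
    have "L h \<noteq> L g" using that assms(4) by blast
    then have "e \<le> dist (L h) (L g)" using e that assms(3) by blast
    also have "\<dots> = norm (L (h - g))" by (simp add: dist_norm linear_diff[OF bounded_linear.linear[OF assms(2)]])
    also have "\<dots> \<le> norm (h - g) * K" by (rule K(2))
    finally show ?thesis using K(1) by (simp add: dist_norm pos_divide_le_eq)
  qed
  then show "\<exists>e>0. \<forall>h\<in>H. h \<noteq> g \<longrightarrow> e \<le> dist h g" using e K by (meson divide_pos_pos)
qed

theorem corollary1:
  fixes w :: "int list" and p :: "int poly" and z :: complex
  assumes "good_word w"
    and "is_word_poly w p"
    and "z \<noteq> 0"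
    and "discrete_set (Gamma_grp z)"
  shows "discrete_set (Gamma_grp (poly (map_poly of_int p) z))"
proof -
  define c where "c = csqrt z"
  have c: "c\<^sup>2 = z" "c \<noteq> 0" using assms(3) by (auto simp: c_def)
  define f where "f = mat2 1 1 0 1"
  define ph where "ph = mat2 0 (-1/c) c 0"
  have finv: "matrix_inv f = mat2 1 (-1) 0 1" by (simp add: f_def matrix_inv_mat2)
  have par: "parabolic f"
    by (simp add: parabolic_def in_SL2_def f_def neg_mat1_mat2 mat2_eq_iff del: mat2_mult)
       (simp add: mat1_mat2 mat2_eq_iff del: mat2_mult)
  have ell: "elliptic_order_two ph"
    using c by (simp add: elliptic_order_two_def in_SL2_def ph_def)
  have gph: "gam f ph = z"
    using c gam_f[of 0 d "-1/c" c for d] by (simp add: f_def ph_def)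
  define W where "W = word_eval w f ph"
  have WN: "W \<in> Nset z"
    unfolding W_def by (rule word_N) (simp add: f_def Nset_f, simp only: finv Nset_f, use Nset_phi[OF c] in \<open>simp add: ph_def\<close>)
  obtain a b c' d where Wm: "W = mat2 a b c' d" by (metis cmat_expand)
  have det: "a*d - b*c' = 1" using WN Wm by (simp add: Nset_def)
  have "gam f W = poly (map_poly of_int p) (gam f ph)"
    using assms(2) par ell unfolding is_word_poly_def W_def by blast
  then have q: "poly (map_poly of_int p) z = c'\<^sup>2"
    using gph gam_f[OF det] Wm by (simp add: f_def)
  define q where "q = c'\<^sup>2"
  define s where "s = a / c'"
  define T where "T = mat2 1 s 0 1"
  define Ti where "Ti = mat2 1 (-s) 0 1"
  have TT: "Ti ** T = mat 1" "T ** Ti = mat 1" by (simp_all add: T_def Ti_def mat1_mat2)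
  have Winv: "matrix_inv (mat2 a b c' d) = mat2 d (-b) (-c') a" using det Wm by (simp add: matrix_inv_mat2)
  have conjW: "\<forall>u\<in>Gamma_grp z. W ** u ** matrix_inv W \<in> Gamma_grp z" using WN by (simp add: Nset_def)
  have g1: "T ** mat2 1 0 q 1 ** Ti \<in> Gamma_grp z"
  proof (cases "c' = 0")
    case True
    then show ?thesis using Gamma_mems(6)[of z] by (simp add: T_def Ti_def q_def s_def mat1_mat2)
  next
    case False
    have "T ** mat2 1 0 q 1 ** Ti = W ** mat2 1 (-1) 0 1 ** matrix_inv W"
      using False det by (simp add: T_def Ti_def q_def s_def Wm Winv mat2_eq_iff field_simps power2_eq_square)
    then show ?thesis using conjW Gamma_mems(2)[of z] by simp
  qed
  have g2: "T ** mat2 1 0 (-q) 1 ** Ti \<in> Gamma_grp z"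
  proof (cases "c' = 0")
    case True
    then show ?thesis using Gamma_mems(6)[of z] by (simp add: T_def Ti_def q_def s_def mat1_mat2)
  next
    case False
    have "T ** mat2 1 0 (-q) 1 ** Ti = W ** mat2 1 1 0 1 ** matrix_inv W"
      using False det by (simp add: T_def Ti_def q_def s_def Wm Winv mat2_eq_iff field_simps power2_eq_square)
    then show ?thesis using conjW Gamma_mems(1)[of z] by simp
  qed
  have g3: "T ** mat2 1 1 0 1 ** Ti = mat2 1 1 0 1" "T ** mat2 1 (-1) 0 1 ** Ti = mat2 1 (-1) 0 1"
    "T ** mat2 (-1) 0 0 (-1) ** Ti = mat2 (-1) 0 0 (-1)"
    by (simp_all add: T_def Ti_def)
  have invs: "matrix_inv (mat2 1 1 0 1) = mat2 1 (-1) 0 1" "matrix_inv (mat2 1 0 q 1) = mat2 1 0 (-q) 1"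
    "matrix_inv (mat2 (-1) 0 0 (-1)) = mat2 (-1) 0 0 (-1)"
    by (simp_all add: matrix_inv_mat2)
  have into: "\<forall>h\<in>Gamma_grp q. T ** h ** Ti \<in> Gamma_grp z"
  proof
    fix h assume "h \<in> Gamma_grp q"
    then show "T ** h ** Ti \<in> Gamma_grp z" unfolding Gamma_grp_def
    proof (rule conj_gen)
      show "\<forall>s\<in>{mat2 1 1 0 1, mat2 1 0 q 1, - mat 1}.
         T ** s ** Ti \<in> gen_group {mat2 1 1 0 1, mat2 1 0 z 1, - mat 1} \<and>
         T ** matrix_inv s ** Ti \<in> gen_group {mat2 1 1 0 1, mat2 1 0 z 1, - mat 1}"
        using Gamma_mems[of z] g1 g2 unfolding Gamma_grp_def
        by (simp only: invs g3 neg_mat1_mat2 ball_simps insert_iff empty_iff)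
    qed (rule TT(1), rule TT(2), rule gen_group.one, blast intro: gen_group_mult)
  qed
  have inj: "x = y" if "T ** x ** Ti = T ** y ** Ti" for x y :: cmat
  proof -
    have "Ti ** (T ** x ** Ti) ** T = Ti ** (T ** y ** Ti) ** T" using that by simp
    moreover have "Ti ** (T ** v ** Ti) ** T = v" for v :: cmat
      by (metis TT matrix_mul_assoc matrix_mul_lid matrix_mul_rid)
    ultimately show ?thesis by simp
  qed
  show ?thesis unfolding q q_def[symmetric]
    by (rule discrete_linear[OF assms(4) conj_bounded_linear into inj])
qed

end
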